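(* Let $R$ be a power-serieswise Armendariz ring. Then the power series ring $R[[x]]$ is a generalized right quasi-Baer ring if and only if $R$ is a generalized right quasi-Baer ring.
   Context: All rings are associative with identity. For a nonempty subset $X$ of a ring $R$, $r_R(X)=\{a\in R : xa=0 \text{ for all } x\in X\}$, and for a positive integer $n$, $X^n$ denotes the set of all products $a_1\cdots a_n$ with $a_i\in X$. A ring $R$ is generalized right quasi-Baer if for every right ideal $I$ of $R$ there exist a positive integer $n$ (depending on $I$) and an idempotent $e\in R$ with $r_R(I^n)=eR$. A ring $R$ is power-serieswise Armendariz if whenever $f(x)=\sum_{i\ge0}a_ix^i$ and $g(x)=\sum_{j\ge0}b_jx^j$ in $R[[x]]$ satisfy $f(x)g(x)=0$, then $a_ib_j=0$ for all $i,j$. *)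

theory Defs
  imports "HOL-Computational_Algebra.Formal_Power_Series"
begin

definition right_ann :: "'a::ring_1 set \<Rightarrow> 'a set" where
  "right_ann X = {a. \<forall>x\<in>X. x * a = 0}"

definition set_power :: "'a::ring_1 set \<Rightarrow> nat \<Rightarrow> 'a set" where
  "set_power X n = {prod_list xs | xs. length xs = n \<and> set xs \<subseteq> X}"

definition right_ideal :: "'a::ring_1 set \<Rightarrow> bool" where
  "right_ideal I \<longleftrightarrow> 0 \<in> I \<and> (\<forall>a\<in>I. \<forall>b\<in>I. a + b \<in> I) \<and> (\<forall>a\<in>I. - a \<in> I)
     \<and> (\<forall>a\<in>I. \<forall>r. a * r \<in> I)"

definition gen_right_quasi_Baer :: "'a::ring_1 itself \<Rightarrow> bool" where
  "gen_right_quasi_Baer _ \<longleftrightarrow>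
     (\<forall>I::'a set. right_ideal I \<longrightarrow>
        (\<exists>n::nat. n > 0 \<and> (\<exists>e::'a. e * e = e \<and> right_ann (set_power I n) = {e * r | r. True})))"

definition ps_Armendariz :: "'a::ring_1 itself \<Rightarrow> bool" where
  "ps_Armendariz _ \<longleftrightarrow>
     (\<forall>f g :: 'a fps. f * g = 0 \<longrightarrow> (\<forall>i j. fps_nth f i * fps_nth g j = 0))"

end

theory Submission
  imports Defs
begin

definition coeffs_of :: "'a::ring_1 fps set \<Rightarrow> 'a set" where
  "coeffs_of J = {fps_nth (f) i | f i. f \<in> J}"

lemma armendariz_list:
  assumes A: "ps_Armendariz TYPE('a::ring_1)"
  shows "fps_const c * prod_list fs * g = 0 \<Longrightarrow> list_all2 (\<lambda>a f. \<exists>i. a = fps_nth (f) i) as fs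
         \<Longrightarrow> c * prod_list as * fps_nth (g :: 'a fps) j = 0"
proof (induction fs arbitrary: c as)
  case Nil
  then have "fps_nth (fps_const c * g) j = 0" by simp
  then show ?case using Nil.prems(2) by simp
next
  case (Cons f fs)
  from Cons.prems(2) obtain a as' where as: "as = a # as'" and ai: "\<exists>i. a = fps_nth (f) i"
    and r: "list_all2 (\<lambda>a f. \<exists>i. a = fps_nth (f) i) as' fs"
    by (auto simp: list_all2_Cons2)
  from ai obtain i where ai: "a = fps_nth (f) i" by blast
  have "(fps_const c * f) * (prod_list fs * g) = 0" using Cons.prems(1) by (simp add: mult.assoc)
  with A have h: "\<And>k m. fps_nth (fps_const c * f) k * fps_nth (prod_list fs * g) m = 0"
    unfolding ps_Armendariz_def by blast
  have "fps_const (c * fps_nth (f) i) * prod_list fs * g = 0"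
    by (rule fps_ext) (use h[of i] in \<open>simp add: mult.assoc\<close>)
  from Cons.IH[OF this r] show ?case by (simp add: as ai mult.assoc)
qed

lemma armendariz_list_rev:
  shows "(\<And>as j. list_all2 (\<lambda>a f. \<exists>i. a = fps_nth (f) i) as fs \<Longrightarrow> c * prod_list as * fps_nth (g :: 'a::ring_1 fps) j = 0)
         \<Longrightarrow> fps_const c * prod_list fs * g = 0"
proof (induction fs arbitrary: c)
  case Nil
  have "c * fps_nth (g) j = 0" for j using Nil[of "[]" j] by simp
  then show ?case by (intro fps_ext) simp
next
  case (Cons f fs)
  have z: "fps_const (c * fps_nth (f) i) * prod_list fs * g = 0" for i
  proof (rule Cons.IH)
    fix as j assume "list_all2 (\<lambda>a f. \<exists>i. a = fps_nth (f) i) as fs"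
    then have "list_all2 (\<lambda>a f. \<exists>i. a = fps_nth (f) i) (fps_nth (f) i # as) (f # fs)" by auto
    from Cons.prems[OF this, of j] show "c * fps_nth (f) i * prod_list as * fps_nth (g) j = 0"
      by (simp add: mult.assoc)
  qed
  show ?case
  proof (rule fps_ext)
    fix k
    have "fps_nth (fps_const c * prod_list (f # fs) * g) k = fps_nth (fps_const c * f * (prod_list fs * g)) k"
      by (simp add: mult.assoc)
    also have "\<dots> = (\<Sum>i=0..k. c * fps_nth (f) i * fps_nth (prod_list fs * g) (k - i))"
      by (simp only: fps_mult_nth[of "fps_const c * f" "prod_list fs * g" k] fps_mult_left_const_nth)
    also have "\<dots> = (\<Sum>i=0..k. fps_nth (fps_const (c * fps_nth f i) * prod_list fs * g) (k - i))"
      by (simp add: mult.assoc)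
    also have "\<dots> = 0" using z by simp
    finally show "fps_nth (fps_const c * prod_list (f # fs) * g) k = fps_nth 0 k" by simp
  qed
qed

lemma choose_list:
  "\<forall>a\<in>set as. \<exists>f\<in>J. \<exists>i. a = fps_nth (f) i \<Longrightarrow>
   \<exists>fs. list_all2 (\<lambda>a f. \<exists>i. a = fps_nth (f) i) as fs \<and> set fs \<subseteq> J"
proof (induction as)
  case Nil then show ?case by auto
next
  case (Cons a as)
  then obtain fs where "list_all2 (\<lambda>a f. \<exists>i. a = fps_nth (f) i) as fs" "set fs \<subseteq> J" by auto
  moreover from Cons.prems obtain f i where "f \<in> J" "a = fps_nth (f) i" by auto
  ultimately show ?case by (intro exI[of _ "f # fs"]) auto
qed

lemma ann_char:
  assumes A: "ps_Armendariz TYPE('a::ring_1)"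
  shows "right_ann (set_power (J :: 'a fps set) n) =
         {g. \<forall>j. fps_nth (g) j \<in> right_ann (set_power (coeffs_of J) n)}"
proof (intro equalityI subsetI)
  fix g assume g: "g \<in> right_ann (set_power J n)"
  show "g \<in> {g. \<forall>j. fps_nth (g) j \<in> right_ann (set_power (coeffs_of J) n)}"
  proof (clarify)
    fix j
    show "fps_nth (g) j \<in> right_ann (set_power (coeffs_of J) n)"
      unfolding right_ann_def
    proof (intro CollectI ballI)
      fix y assume "y \<in> set_power (coeffs_of J) n"
      then obtain as where y: "y = prod_list as" "length as = n" "set as \<subseteq> coeffs_of J"
        unfolding set_power_def by auto
      then have "\<forall>a\<in>set as. \<exists>f\<in>J. \<exists>i. a = fps_nth (f) i" unfolding coeffs_of_def by blast
      from choose_list[OF this] obtain fs where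
        fs: "list_all2 (\<lambda>a f. \<exists>i. a = fps_nth (f) i) as fs" "set fs \<subseteq> J" by blast
      have "length fs = n" using fs(1) y(2) by (simp add: list_all2_lengthD)
      then have "prod_list fs \<in> set_power J n" using fs(2) unfolding set_power_def by auto
      with g have "prod_list fs * g = 0" unfolding right_ann_def by auto
      then have "fps_const 1 * prod_list fs * g = 0" by simp
      from armendariz_list[OF A this fs(1)] show "y * fps_nth (g) j = 0" by (simp add: y)
    qed
  qed
next
  fix g assume g: "g \<in> {g. \<forall>j. fps_nth (g) j \<in> right_ann (set_power (coeffs_of J) n)}"
  show "g \<in> right_ann (set_power J n)"
    unfolding right_ann_def
  proof (intro CollectI ballI)
    fix y assume "y \<in> set_power J n"
    then obtain fs where y: "y = prod_list fs" "length fs = n" "set fs \<subseteq> J"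
      unfolding set_power_def by auto
    have "fps_const 1 * prod_list fs * g = 0"
    proof (rule armendariz_list_rev)
      fix as j assume l: "list_all2 (\<lambda>a f. \<exists>i. a = fps_nth (f) i) as fs"
      have "length as = n" using l y(2) by (simp add: list_all2_lengthD)
      moreover have "set as \<subseteq> coeffs_of J"
      proof
        fix a assume "a \<in> set as"
        then obtain k where k: "k < length as" "a = as ! k" by (auto simp: in_set_conv_nth)
        with l have "\<exists>i. a = fps_nth (fs ! k) i" "k < length fs"
          by (auto simp: list_all2_conv_all_nth)
        with y(3) show "a \<in> coeffs_of J" unfolding coeffs_of_def
          by (auto dest: nth_mem)
      qed
      ultimately have "prod_list as \<in> set_power (coeffs_of J) n" unfolding set_power_def by auto
      with g show "1 * prod_list as * fps_nth (g) j = 0" unfolding right_ann_def by auto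
    qed
    then show "y * g = 0" by (simp add: y)
  qed
qed

lemma right_ann_mult:
  "a \<in> right_ann X \<Longrightarrow> a * r \<in> right_ann X"
  unfolding right_ann_def by (auto simp: mult.assoc[symmetric])

lemma coeffs_right_ideal:
  assumes J: "right_ideal (J :: 'a::ring_1 fps set)"
  shows "right_ideal (coeffs_of J)"
  unfolding right_ideal_def
proof (intro conjI ballI allI)
  show "0 \<in> coeffs_of J" using J unfolding right_ideal_def coeffs_of_def
    by (auto intro!: exI[of _ 0])
next
  fix a b assume "a \<in> coeffs_of J" "b \<in> coeffs_of J"
  then obtain f i g j where f: "f \<in> J" "a = fps_nth (f) i" and g: "g \<in> J" "b = fps_nth (g) j"
    unfolding coeffs_of_def by auto
  show "a + b \<in> coeffs_of J"
  proof (cases "j \<le> i")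
    case True
    have "g * fps_X ^ (i - j) \<in> J" using J g(1) unfolding right_ideal_def by auto
    then have "f + g * fps_X ^ (i - j) \<in> J" using J f(1) unfolding right_ideal_def by auto
    moreover have F: "fps_nth (f + g * fps_X ^ (i - j)) i = a + b"
      proof -
      have "\<not> i < i - j" by simp
      then show ?thesis using True by (simp add: fps_X_power_mult_right_nth f g)
    qed
    ultimately show ?thesis unfolding coeffs_of_def using F[symmetric] by blast
  next
    case False
    have "f * fps_X ^ (j - i) \<in> J" using J f(1) unfolding right_ideal_def by auto
    then have "f * fps_X ^ (j - i) + g \<in> J" using J g(1) unfolding right_ideal_def by auto
    moreover have F: "fps_nth (f * fps_X ^ (j - i) + g) j = a + b"
      proof -
      have "\<not> j < j - i" by simp
      then show ?thesis using False by (simp add: fps_X_power_mult_right_nth f g)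
    qed
    ultimately show ?thesis unfolding coeffs_of_def using F[symmetric] by blast
  qed
next
  fix a assume "a \<in> coeffs_of J"
  then obtain f i where f: "f \<in> J" "a = fps_nth (f) i" unfolding coeffs_of_def by auto
  then have "- f \<in> J" using J unfolding right_ideal_def by auto
  with f show "- a \<in> coeffs_of J" unfolding coeffs_of_def by (auto intro!: exI[of _ "- f"])
next
  fix a r assume "a \<in> coeffs_of J"
  then obtain f i where f: "f \<in> J" "a = fps_nth (f) i" unfolding coeffs_of_def by auto
  then have "f * fps_const r \<in> J" using J unfolding right_ideal_def by auto
  with f show "a * r \<in> coeffs_of J" unfolding coeffs_of_def by (auto intro!: exI[of _ "f * fps_const r"])
qed

lemma sum_in_right_ideal:
  assumes "right_ideal I" "\<forall>i\<in>S. h i \<in> I"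
  shows "sum h S \<in> I"
proof (cases "finite S")
  case True
  then show ?thesis using assms(2)
    by (induction S rule: finite_induct) (use assms(1) in \<open>auto simp: right_ideal_def\<close>)
next
  case False then show ?thesis using assms(1) by (simp add: right_ideal_def)
qed

lemma ext_right_ideal:
  assumes I: "right_ideal (I :: 'a::ring_1 set)"
  shows "right_ideal {f :: 'a fps. \<forall>i. fps_nth (f) i \<in> I}"
  unfolding right_ideal_def
proof (intro conjI ballI allI; clarsimp)
  show "\<And>i. 0 \<in> I" using I by (simp add: right_ideal_def)
  show "\<And>a b i. \<forall>i. fps_nth (a) i \<in> I \<Longrightarrow> \<forall>i. fps_nth (b) i \<in> I \<Longrightarrow> fps_nth (a) i + fps_nth (b) i \<in> I"
    using I by (simp add: right_ideal_def)
  show "\<And>a i. \<forall>i. fps_nth (a) i \<in> I \<Longrightarrow> - fps_nth (a) i \<in> I"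
    using I by (simp add: right_ideal_def)
  show "\<And>a r i. \<forall>i. fps_nth (a) i \<in> I \<Longrightarrow> fps_nth (a * r) i \<in> I"
    unfolding fps_mult_nth
    by (rule sum_in_right_ideal[OF I]) (use I in \<open>auto simp: right_ideal_def\<close>)
qed

lemma coeffs_ext:
  assumes I: "right_ideal (I :: 'a::ring_1 set)"
  shows "coeffs_of {f :: 'a fps. \<forall>i. fps_nth (f) i \<in> I} = I"
proof (intro equalityI subsetI)
  fix a assume "a \<in> coeffs_of {f :: 'a fps. \<forall>i. fps_nth (f) i \<in> I}"
  then show "a \<in> I" unfolding coeffs_of_def by auto
next
  fix a assume a: "a \<in> I"
  have "\<forall>i. fps_nth (fps_const a) i \<in> I" using a I by (auto simp: right_ideal_def)
  then have "fps_nth (fps_const a) 0 \<in> coeffs_of {f :: 'a fps. \<forall>i. fps_nth (f) i \<in> I}"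
    unfolding coeffs_of_def by blast
  then show "a \<in> coeffs_of {f :: 'a fps. \<forall>i. fps_nth (f) i \<in> I}" by simp
qed

theorem corollary3p9:
  assumes "ps_Armendariz TYPE('a::ring_1)"
  shows "gen_right_quasi_Baer TYPE('a fps) \<longleftrightarrow> gen_right_quasi_Baer TYPE('a)"
proof
  assume H: "gen_right_quasi_Baer TYPE('a fps)"
  show "gen_right_quasi_Baer TYPE('a)"
    unfolding gen_right_quasi_Baer_def
  proof (intro allI impI)
    fix I :: "'a set" assume I: "right_ideal I"
    define J where "J = {f :: 'a fps. \<forall>i. fps_nth (f) i \<in> I}"
    have "right_ideal J" unfolding J_def by (rule ext_right_ideal[OF I])
    with H obtain n E where n: "n > 0" and E: "E * E = E"
      and ann: "right_ann (set_power J n) = {E * r | r. True}"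
      unfolding gen_right_quasi_Baer_def by blast
    have CJ: "coeffs_of J = I" unfolding J_def by (rule coeffs_ext[OF I])
    have ann2: "{E * r | r. True} = {g. \<forall>j. fps_nth (g) j \<in> right_ann (set_power I n)}"
      using ann ann_char[OF assms, of J n] CJ by simp
    define e where "e = fps_nth (E) 0"
    have "e * e = e" using arg_cong[OF E, of "\<lambda>f. fps_nth (f) 0"] by (simp add: e_def)
    moreover have "right_ann (set_power I n) = {e * r | r. True}"
    proof (intro equalityI subsetI)
      fix a assume a: "a \<in> right_ann (set_power I n)"
      have "fps_const a \<in> {g. \<forall>j. fps_nth (g) j \<in> right_ann (set_power I n)}"
        using a by (auto simp: right_ann_def)
      then obtain r where "fps_const a = E * r" using ann2 by blast
      then have "E * fps_const a = fps_const a" using E by (metis mult.assoc)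
      then have "fps_nth (E * fps_const a) 0 = fps_nth (fps_const a) 0" by simp
      then have "e * a = a" by (simp add: e_def)
      then show "a \<in> {e * r | r. True}" by (intro CollectI exI[of _ a]) simp
    next
      fix y assume "y \<in> {e * r | r. True}"
      then obtain r where y: "y = e * r" by auto
      have "E \<in> {E * r | r. True}" by (auto intro!: exI[of _ 1])
      then have "e \<in> right_ann (set_power I n)" using ann2 unfolding e_def by auto
      then show "y \<in> right_ann (set_power I n)" using y by (simp add: right_ann_mult)
    qed
    ultimately show "\<exists>n>0. \<exists>e. e * e = e \<and> right_ann (set_power I n) = {e * r | r. True}"
      using n by blast
  qed
next
  assume H: "gen_right_quasi_Baer TYPE('a)"
  show "gen_right_quasi_Baer TYPE('a fps)"
    unfolding gen_right_quasi_Baer_def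
  proof (intro allI impI)
    fix J :: "'a fps set" assume J: "right_ideal J"
    have "right_ideal (coeffs_of J)" by (rule coeffs_right_ideal[OF J])
    with H obtain n e where n: "n > 0" and e: "e * e = e"
      and ann: "right_ann (set_power (coeffs_of J) n) = {e * r | r. True}"
      unfolding gen_right_quasi_Baer_def by blast
    have ann2: "right_ann (set_power J n) = {g. \<forall>j. fps_nth (g) j \<in> {e * r | r. True}}"
      using ann_char[OF assms, of J n] ann by simp
    have "fps_const e * fps_const e = fps_const e" using e by simp
    moreover have "right_ann (set_power J n) = {fps_const e * r | r. True}"
      unfolding ann2
    proof (intro equalityI subsetI)
      fix g assume G: "g \<in> {g. \<forall>j. fps_nth (g) j \<in> {e * r | r. True}}"
      have "\<forall>j. e * fps_nth (g) j = fps_nth (g) j"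
      proof (intro allI)
        fix j
        from G obtain r where "fps_nth g j = e * r" by blast
        then show "e * fps_nth g j = fps_nth g j" using e by (simp add: mult.assoc[symmetric])
      qed
      then have "fps_const e * g = g" by (intro fps_ext) simp
      then show "g \<in> {fps_const e * r | r. True}" by (intro CollectI exI[of _ g]) simp
    next
      fix g assume "g \<in> {fps_const e * r | r. True}"
      then show "g \<in> {g. \<forall>j. fps_nth (g) j \<in> {e * r | r. True}}" by auto
    qed
    ultimately show "\<exists>n>0. \<exists>E. E * E = E \<and> right_ann (set_power J n) = {E * r | r. True}"
      using n by blast
  qed
qed

end
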